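(* For all positive integers $n$, $$\sum_{j=0}^{n-2}\frac{A_{n,n-1,j}}{(1+x)^{n-1-j}(1+y)^{n-1-j}}+\frac{xy-(n-1)(x+y)}{xy}=\left(\frac{xy}{(1+x)(1+y)}\right)^{n-1}.$$
   Context: For a positive integer $n$ and $0\le j\le n-2$, $$A_{n,n-1,j}=\frac{(-1)^{n+j}}{xy}\sum_{l=j}^{n}\left(\binom lj\binom{n+j-1-l}{j}x^{l-j}y^{n-1-l}+\binom lj\binom{n+j-l}{j}x^{l-j}y^{n-l}\right),$$ where $x,y$ are indeterminates and binomial coefficients $\binom ab$ are $0$ if $b<0$ or $a<b$. *)

theory Defs imports Complex_Main begin

definition ibinom :: "int \<Rightarrow> int \<Rightarrow> int" where
  "ibinom a b = (if b < 0 \<or> a < b then 0 else int (nat a choose nat b))"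

text \<open>A_{n,n-1,j}, with x, y elements of a field of characteristic 0 (values of the indeterminates).\<close>
definition Acoef :: "nat \<Rightarrow> nat \<Rightarrow> 'a::field_char_0 \<Rightarrow> 'a \<Rightarrow> 'a" where
  "Acoef n j x y = (-1) ^ (n + j) / (x * y) *
     (\<Sum>l = j..n.
        of_int (ibinom (int l) (int j) * ibinom (int n + int j - 1 - int l) (int j))
          * x powi (int l - int j) * y powi (int n - 1 - int l)
      + of_int (ibinom (int l) (int j) * ibinom (int n + int j - int l) (int j))
          * x powi (int l - int j) * y powi (int n - int l))"

end

theory Submission imports Defs "HOL-Computational_Algebra.Formal_Power_Series" begin

definition Ag :: "'a::field \<Rightarrow> nat \<Rightarrow> 'a fps" where
  "Ag c j = Abs_fps (\<lambda>k. of_nat ((k+j) choose j) * c^k)"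

lemma Ag_nth[simp]: "fps_nth (Ag c j) k = of_nat ((k+j) choose j) * c^k"
  by (simp add: Ag_def)

lemma mult_1mX_nth: fixes c :: "'a::field" shows "fps_nth (A * (1 - fps_const c * fps_X)) k = fps_nth A k - (if k = 0 then 0 else c * fps_nth A (k-1))"
proof -
  have "A * (1 - fps_const c * fps_X) = A - fps_const c * (fps_X * A)" by (simp add: right_diff_distrib mult_ac)
  then show ?thesis by (simp add: fps_X_mult_nth)
qed

lemma Ag0: "Ag (c::'a::field) 0 * (1 - fps_const c * fps_X) = 1"
  by (rule fps_ext) (auto simp: mult_1mX_nth power_eq_if)

lemma AgSuc: "Ag (c::'a::field) (Suc j) * (1 - fps_const c * fps_X) = Ag c j"
proof (rule fps_ext)
  fix k show "fps_nth (Ag c (Suc j) * (1 - fps_const c * fps_X)) k = fps_nth (Ag c j) k"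
  proof (cases k)
    case 0 then show ?thesis by (simp add: mult_1mX_nth)
  next
    case (Suc k')
    have "Suc k' + Suc j = Suc (Suc k' + j)" by simp
    then have "((Suc k' + Suc j) choose (Suc j)) = ((Suc k' + j) choose j) + ((k' + Suc j) choose (Suc j))"
      by (simp add: binomial_Suc_Suc)
    then show ?thesis using Suc by (simp add: mult_1mX_nth algebra_simps)
  qed
qed

lemma Ag_inv: "Ag (c::'a::field) j * (1 - fps_const c * fps_X)^Suc j = 1"
proof (induction j)
  case 0 then show ?case using Ag0 by simp
next
  case (Suc j)
  have "Ag c (Suc j) * (1 - fps_const c * fps_X)^Suc (Suc j)
      = (Ag c (Suc j) * (1 - fps_const c * fps_X)) * (1 - fps_const c * fps_X)^Suc j"
    by (metis mult.assoc power_Suc)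
  also have "\<dots> = Ag c j * (1 - fps_const c * fps_X)^Suc j" by (simp only: AgSuc)
  also have "\<dots> = 1" by (rule Suc.IH)
  finally show ?case .
qed


definition Pc :: "nat \<Rightarrow> nat \<Rightarrow> 'a::field \<Rightarrow> 'a \<Rightarrow> 'a" where
  "Pc j k x y = (\<Sum>i\<le>k. of_nat ((i+j) choose j) * x^i * (of_nat ((k-i+j) choose j) * y^(k-i)))"

lemma inv_unique:
  fixes a b p :: "'b::comm_ring_1"
  assumes "a * p = 1" "b * p = 1" shows "a = b"
proof -
  have "a = a * (p * b)" using assms(2) by (simp add: mult_ac)
  also have "\<dots> = (a * p) * b" by (simp add: mult_ac)
  finally show ?thesis using assms(1) by simp
qed

lemma Q_facts:
  fixes x y :: "'a::field"
  defines "q \<equiv> (1 - fps_const (-x) * fps_X) * (1 - fps_const (-y) * fps_X)"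
    and "Q \<equiv> Ag (-x) 0 * Ag (-y) 0"
  shows "Q * q = 1" and "Q^Suc j = Ag (-x) j * Ag (-y) j"
proof -
  show Qq: "Q * q = 1" using Ag_inv[of "-x" 0] Ag_inv[of "-y" 0]
    unfolding Q_def q_def by (simp add: mult_ac)
  have "(Ag (-x) j * Ag (-y) j) * q^Suc j
     = (Ag (-x) j * (1 - fps_const (-x) * fps_X)^Suc j) * (Ag (-y) j * (1 - fps_const (-y) * fps_X)^Suc j)"
    unfolding q_def by (simp only: power_mult_distrib mult_ac)
  then have A1: "(Ag (-x) j * Ag (-y) j) * q^Suc j = 1"
    by (simp only: Ag_inv mult_1)
  have "Q^Suc j * q^Suc j = (Q * q)^Suc j" by (simp only: power_mult_distrib)
  then have A2: "Q^Suc j * q^Suc j = 1" using Qq by simp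
  show "Q^Suc j = Ag (-x) j * Ag (-y) j" using A2 A1 by (rule inv_unique)
qed

lemma Agprod_nth:
  fixes x y :: "'a::field"
  shows "fps_nth (Ag (-x) j * Ag (-y) j) k = (-1)^k * Pc j k x y"
proof -
  have "fps_nth (Ag (-x) j * Ag (-y) j) k
      = (\<Sum>i\<le>k. (-1)^k * (of_nat ((i+j) choose j) * x^i * (of_nat ((k-i+j) choose j) * y^(k-i))))"
    unfolding fps_mult_nth atMost_atLeast0[symmetric]
  proof (rule sum.cong)
    fix i assume "i \<in> {..k}"
    then have "(-1::'a)^k = (-1)^i * (-1)^(k-i)" by (simp add: power_add[symmetric])
    then show "fps_nth (Ag (- x) j) i * fps_nth (Ag (- y) j) (k - i) =
         (-1)^k * (of_nat ((i+j) choose j) * x^i * (of_nat ((k-i+j) choose j) * y^(k-i)))"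
      by (simp add: power_minus[of x] power_minus[of y] mult_ac)
  qed simp
  then show ?thesis by (simp add: Pc_def sum_distrib_left)
qed


lemma ring_id:
  fixes a b X :: "'b::comm_ring_1"
  shows "(1 - (-a)*X)*(1 - (-b)*X) - (1 + a + b + a*b)*X = (1 - a*b*X)*(1 - 1*X)"
  by (simp add: algebra_simps)

lemma main_id:
  fixes x y :: "'a::field"
  defines "T \<equiv> 1 + x + y + x*y"
  shows "(\<Sum>j\<le>m. (-1)^(m+1-j) * T^j * (Pc j (m-j) x y + Pc j (m+1-j) x y)) = (x*y)^(m+1) - T^(m+1)"
proof -
  define q where "q = (1 - fps_const (-x) * fps_X) * (1 - fps_const (-y) * fps_X)"
  define Q where "Q = Ag (-x) 0 * Ag (-y) 0"
  have Qq: "Q*q = 1" and Qp: "\<And>j. Q^Suc j = Ag (-x) j * Ag (-y) j"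
    using Q_facts[of x y] unfolding q_def Q_def by auto
  define D where "D = (1 - fps_const (x*y) * fps_X) * (1 - fps_const 1 * fps_X)"
  define G where "G = Ag (x*y) 0 * Ag 1 0"
  have "G * D = (Ag (x*y) 0 * (1 - fps_const (x*y) * fps_X)^Suc 0) * (Ag 1 0 * (1 - fps_const 1 * fps_X)^Suc 0)"
    unfolding G_def D_def by (simp only: power_Suc0_right mult_ac)
  then have GD: "G * D = 1" by (simp only: Ag_inv mult_1)
  have Gn: "\<And>k. fps_nth G k = (\<Sum>i\<le>k. (x*y)^i)"
    unfolding G_def fps_mult_nth by (simp add: atMost_atLeast0)
  define r where "r = fps_const T * fps_X * Q"
  define S where "S = (\<Sum>j\<le>m. r^j)"
  have cT: "fps_const T = 1 + fps_const x + fps_const y + fps_const x * fps_const y"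
    unfolding T_def by (simp add: fps_eq_iff)
  have key: "q - fps_const T * fps_X = D"
  proof -
    have h1: "fps_const (-x) = - fps_const x" "fps_const (-y) = - fps_const y"
      "fps_const (x*y) = fps_const x * fps_const y" "fps_const (1::'a) = 1" by simp_all
    show ?thesis unfolding q_def D_def cT h1 by (rule ring_id)
  qed
  have omr: "1 - r = D * Q"
  proof -
    have "D * Q = q * Q - fps_const T * fps_X * Q" unfolding key[symmetric] by (simp add: algebra_simps)
    then show ?thesis using Qq by (simp add: r_def mult_ac)
  qed
  have gp: "(1 - r) * S = 1 - r^Suc m" by (simp add: S_def sum_gp_basic)
  have QS: "Q * S = G * (1 - r^Suc m)"
  proof -
    have "Q * S = (G * D) * (Q * S)" using GD by simp
    also have "\<dots> = G * ((D * Q) * S)" by (simp add: mult_ac)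
    also have "\<dots> = G * ((1 - r) * S)" by (simp only: omr)
    also have "\<dots> = G * (1 - r^Suc m)" by (simp only: gp)
    finally show ?thesis .
  qed
  have rp: "r^Suc m = fps_X^Suc m * (fps_const T * Q)^Suc m"
    unfolding r_def by (simp only: power_mult_distrib mult_ac)
  have Q0: "fps_nth Q 0 = 1" by (simp add: Q_def)
  have G0: "fps_nth G 0 = 1" by (simp add: Gn)
  have nthA: "fps_nth (Q*S) k = fps_nth G k - (if k < Suc m then 0 else fps_nth ((fps_const T * Q)^Suc m * G) (k - Suc m))" for k
  proof -
    have "Q * S = G - fps_X^Suc m * ((fps_const T * Q)^Suc m * G)"
      unfolding QS rp by (simp add: algebra_simps)
    then show ?thesis by (simp add: fps_X_power_mult_nth del: power_Suc)
  qed
  have nthB: "fps_nth (Q*S) k = (\<Sum>j\<le>m. T^j * (if k < j then 0 else (-1)^(k-j) * Pc j (k-j) x y))" for k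
  proof -
    have "Q * S = (\<Sum>j\<le>m. fps_const (T^j) * (fps_X^j * Q^Suc j))"
      unfolding S_def sum_distrib_left r_def
      by (rule sum.cong) (simp_all add: power_mult_distrib fps_const_power mult_ac)
    then show ?thesis
      by (simp only: fps_sum_nth fps_mult_left_const_nth fps_X_power_mult_nth Qp Agprod_nth fps_const_power)
  qed
  have e1: "fps_nth (Q*S) (Suc m) - fps_nth (Q*S) m = (x*y)^(m+1) - T^(m+1)"
    using nthA[of "Suc m"] nthA[of m] by (simp add: Gn G0 Q0 fps_power_zeroth)
  have "(\<Sum>j\<le>m. (-1)^(m+1-j) * T^j * (Pc j (m-j) x y + Pc j (m+1-j) x y))
      = fps_nth (Q*S) (Suc m) - fps_nth (Q*S) m"
    unfolding nthB sum_subtractf[symmetric]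
  proof (rule sum.cong)
    fix j assume "j \<in> {..m}"
    then have jm: "j \<le> m" by simp
    then have "Suc m - j = Suc (m - j)" by (simp add: Suc_diff_le)
    then show "(-1)^(m+1-j) * T^j * (Pc j (m-j) x y + Pc j (m+1-j) x y) =
      T^j * (if Suc m < j then 0 else (-1)^(Suc m-j) * Pc j (Suc m-j) x y) -
      T^j * (if m < j then 0 else (-1)^(m-j) * Pc j (m-j) x y)"
      using jm by (simp add: algebra_simps)
  qed simp
  then show ?thesis using e1 by simp
qed


lemma ibinom_nat: "ibinom (int a) (int b) = int (a choose b)"
  by (simp add: ibinom_def binomial_eq_0)

lemma Acoef_eq:
  fixes x y :: "'a::field_char_0"
  assumes "j \<le> n - 1" "n > 0"
  shows "Acoef n j x y = (-1)^(n+j) / (x*y) * (Pc j (n-1-j) x y + Pc j (n-j) x y)"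
proof -
  have nj: "n - j = Suc (n - 1 - j)" using assms by simp
  have ivl: "{j..n} = {0+j..(n-j)+j}" using assms by simp
  define f where "f l = of_int (ibinom (int l) (int j) * ibinom (int n + int j - 1 - int l) (int j))
          * x powi (int l - int j) * y powi (int n - 1 - int l)" for l
  define g where "g l = of_int (ibinom (int l) (int j) * ibinom (int n + int j - int l) (int j))
          * x powi (int l - int j) * y powi (int n - int l)" for l
  have A: "Acoef n j x y = (-1)^(n+j) / (x*y) * ((\<Sum>l=j..n. f l) + (\<Sum>l=j..n. g l))"
    unfolding Acoef_def f_def g_def by (simp add: sum.distrib)
  have F: "(\<Sum>l=j..n. f l) = Pc j (n-1-j) x y"
  proof -
    have "(\<Sum>l=j..n. f l) = (\<Sum>i=0..n-j. f (i+j))" unfolding ivl by (rule sum.shift_bounds_cl_nat_ivl)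
    also have "\<dots> = (\<Sum>i\<le>n-1-j. f (i+j)) + f (n - j + j)"
      by (simp add: atMost_atLeast0[symmetric] nj)
    also have "f (n - j + j) = 0"
    proof -
      have "int n + int j - 1 - int (n - j + j) = int j - 1" using assms by simp
      then show ?thesis unfolding f_def by (simp add: ibinom_def)
    qed
    also have "(\<Sum>i\<le>n-1-j. f (i+j)) = Pc j (n-1-j) x y"
      unfolding Pc_def
    proof (rule sum.cong)
      fix i assume "i \<in> {..n-1-j}"
      then have i: "i \<le> n - 1 - j" by simp
      have e1: "int n + int j - 1 - int (i + j) = int (n - 1 - j - i + j)" using i assms by simp
      have e2: "int (i + j) - int j = int i" by simp
      have e3: "int n - 1 - int (i + j) = int (n - 1 - j - i)" using i assms by simp
      show "f (i + j) = of_nat ((i+j) choose j) * x^i * (of_nat ((n-1-j-i+j) choose j) * y^(n-1-j-i))"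
        unfolding f_def e1 e2 e3 ibinom_nat power_int_of_nat by (simp add: mult_ac)
    qed simp
    finally show ?thesis by simp
  qed
  have G: "(\<Sum>l=j..n. g l) = Pc j (n-j) x y"
  proof -
    have "(\<Sum>l=j..n. g l) = (\<Sum>i=0..n-j. g (i+j))" unfolding ivl by (rule sum.shift_bounds_cl_nat_ivl)
    also have "\<dots> = Pc j (n-j) x y"
      unfolding Pc_def atMost_atLeast0
    proof (rule sum.cong)
      fix i assume "i \<in> {0..n-j}"
      then have i: "i \<le> n - j" by simp
      have e1: "int n + int j - int (i + j) = int (n - j - i + j)" using i assms by simp
      have e2: "int (i + j) - int j = int i" by simp
      have e3: "int n - int (i + j) = int (n - j - i)" using i assms by simp
      show "g (i + j) = of_nat ((i+j) choose j) * x^i * (of_nat ((n-j-i+j) choose j) * y^(n-j-i))"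
        unfolding g_def e1 e2 e3 ibinom_nat power_int_of_nat by (simp add: mult_ac)
    qed simp
    finally show ?thesis .
  qed
  show ?thesis using A F G by simp
qed


lemma Pc_0: "Pc j 0 x y = 1" by (simp add: Pc_def)
lemma Pc_1: "Pc j (Suc 0) x y = of_nat (Suc j) * (x + y)"
  by (simp add: Pc_def algebra_simps)

theorem lemma7:
  fixes x y :: "'a::field_char_0" and n :: nat
  assumes "n > 0" and "x \<noteq> 0" and "y \<noteq> 0" and "1 + x \<noteq> 0" and "1 + y \<noteq> 0"
  shows "(\<Sum>j<n - 1. Acoef n j x y / ((1 + x) ^ (n - 1 - j) * (1 + y) ^ (n - 1 - j)))
           + (x * y - of_nat (n - 1) * (x + y)) / (x * y)
         = (x * y / ((1 + x) * (1 + y))) ^ (n - 1)"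
proof -
  define m where "m = n - 1"
  have n: "n = Suc m" using assms(1) unfolding m_def by simp
  define T where "T = 1 + x + y + x*y"
  have T1: "(1 + x) * (1 + y) = T" unfolding T_def by (simp add: algebra_simps)
  have T0: "T \<noteq> 0" using assms T1 by (metis mult_eq_0_iff)
  have xy0: "x * y \<noteq> 0" using assms by simp
  have sgn: "(-1::'a)^(n+j) = (-1)^(m+1-j)" if "j \<le> m" for j
  proof -
    have "n + j = (m+1-j) + 2*j" using that n by simp
    then show ?thesis by (simp add: power_add power_mult)
  qed
  have full: "(\<Sum>j\<le>m. Acoef n j x y * T^j) = ((x*y)^(m+1) - T^(m+1)) / (x*y)"
  proof -
    have "(\<Sum>j\<le>m. Acoef n j x y * T^j)
        = (\<Sum>j\<le>m. (-1)^(m+1-j) * T^j * (Pc j (m-j) x y + Pc j (m+1-j) x y)) / (x*y)"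
      unfolding sum_divide_distrib
    proof (rule sum.cong)
      fix j assume "j \<in> {..m}"
      then have j: "j \<le> m" by simp
      have "Acoef n j x y = (-1)^(n+j) / (x*y) * (Pc j (n-1-j) x y + Pc j (n-j) x y)"
        using Acoef_eq[of j n x y] j n by simp
      also have "\<dots> = (-1)^(m+1-j) / (x*y) * (Pc j (m-j) x y + Pc j (m+1-j) x y)"
        using sgn[OF j] n by simp
      finally show "Acoef n j x y * T^j = (-1)^(m+1-j) * T^j * (Pc j (m-j) x y + Pc j (m+1-j) x y) / (x*y)"
        by simp
    qed simp
    then show ?thesis using main_id[of m x y] unfolding T_def by simp
  qed
  have lastA: "Acoef n m x y = - ((1 + (1 + of_nat m) * (x + y)) / (x * y))"
  proof -
    have "Acoef n m x y = (-1)^(n+m) / (x*y) * (Pc m (n-1-m) x y + Pc m (n-m) x y)"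
      using Acoef_eq[of m n x y] n by simp
    also have "(-1::'a)^(n+m) = -1" using sgn[of m] by simp
    also have "n - 1 - m = 0" using n by simp
    also have "n - m = 1" using n by simp
    finally show ?thesis by (simp add: Pc_0 Pc_1)
  qed
  have part: "(\<Sum>j<m. Acoef n j x y * T^j)
      = ((x*y)^(m+1) - T^(m+1))/(x*y) + (1 + (1 + of_nat m) * (x + y)) / (x * y) * T^m"
  proof -
    have "(\<Sum>j\<le>m. Acoef n j x y * T^j) = (\<Sum>j<m. Acoef n j x y * T^j) + Acoef n m x y * T^m"
      by (simp add: lessThan_Suc_atMost[symmetric])
    then have "(\<Sum>j<m. Acoef n j x y * T^j) = (\<Sum>j\<le>m. Acoef n j x y * T^j) - Acoef n m x y * T^m"
      by (simp add: eq_diff_eq)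
    also have "\<dots> = ((x*y)^(m+1) - T^(m+1))/(x*y) - (- ((1 + (1 + of_nat m) * (x + y)) / (x * y))) * T^m"
      by (simp only: full lastA)
    finally show ?thesis by simp
  qed
  have lhs1: "(\<Sum>j<m. Acoef n j x y / ((1 + x) ^ (m - j) * (1 + y) ^ (m - j)))
      = (\<Sum>j<m. Acoef n j x y * T^j) / T^m"
    unfolding sum_divide_distrib
  proof (rule sum.cong)
    fix j assume "j \<in> {..<m}"
    then have "T^m = T^(m-j) * T^j" by (simp add: power_add[symmetric])
    then show "Acoef n j x y / ((1 + x) ^ (m - j) * (1 + y) ^ (m - j)) = Acoef n j x y * T^j / T^m"
      using T0 by (simp add: power_mult_distrib[symmetric] T1)
  qed simp
  have rhs: "(x * y / ((1 + x) * (1 + y))) ^ m = (x*y)^m / T^m"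
    by (simp add: T1 power_divide)
  show ?thesis
    unfolding m_def[symmetric] lhs1 part rhs
    using T0 xy0 unfolding T_def
    by (simp add: field_simps)
qed

end
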